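(* Consider random variables $Z\in\{w,b\}$, a discrete covariate vector $X$, potential first-stage outcomes $M(w),M(b)\in\{0,1\}$ and potential second-stage binary outcomes $Y(z,m)$ for $z\in\{w,b\}$, $m\in\{0,1\}$, with observed quantities $M = M(Z)$ and $Y = Y(Z,M)$. Let $\mathrm{CDE}_{\mathrm{Ob}} = \mathbb{E}[Y(b,1)-Y(w,1)\mid M=1]$, and let $\Delta_n$ be the stratified difference-in-means estimator computed from $n$ i.i.d. draws $(X_i,Z_i,Y_i)$ from the distribution of $(X,Z,Y)$ given $M=1$: \[ \Delta_n = \sum_x \Big[\tfrac{1}{n_{bx}}\textstyle\sum_{i\in S_{bx}} Y_i\Big]\tfrac{n_x}{n} - \sum_x \Big[\tfrac{1}{n_{wx}}\textstyle\sum_{i\in S_{wx}} Y_i\Big]\tfrac{n_x}{n}, \] where $S_{zx}=\{i: Z_i=z, X_i=x\}$, $n_{zx}=|S_{zx}|$ and $n_x=|\{i:X_i=x\}|$; "$\Delta_n$ is consistent" means $\Delta_n\to\mathrm{CDE}_{\mathrm{Ob}}$ almost surely. Define the conditions (each for all $z,z'\in\{w,b\}$, $m\in\{0,1\}$): (SeqI) sequential ignorability: $\{Y(z',m), M(z)\}\perp\!\!\!\perp Z \mid X$ and $Y(z',m)\perp\!\!\!\perp M \mid Z, X$; (SubI) subset ignorability: $Y(z,1)\perp\!\!\!\perp Z\mid X, M=1$; (TI) treatment ignorability: $M(z)\perp\!\!\!\perp Z\mid X$ and $Y(z',m)\perp\!\!\!\perp Z\mid M(w),M(b),X$; (MI)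 mediator ignorability: $Y(z,m)\perp\!\!\!\perp M(w)\mid Z=z, M(b)=1, X$; (MM) mediator monotonicity: $M(b)\ge M(w)$. Assume overlap holds: $\Pr(Z=z\mid X=x, M=1)>0$ for all $x$ and $z$. Then, among joint distributions satisfying overlap: (1) SeqI implies SubI; (2) SubI does not imply SeqI (there is a distribution satisfying SubI but not SeqI); (3) SubI implies $\Delta_n$ is consistent; (4) consistency of $\Delta_n$ does not imply SubI; (5) consistency of $\Delta_n$ does not imply TI; (6) TI does not imply consistency of $\Delta_n$; (7) TI, MI and MM jointly imply that $\Delta_n$ is consistent; (8) consistency of $\Delta_n$ does not imply that TI, MI and MM all hold.
   Context: Single-treatment version of a two-stage decision model: $Z$ is (perceived) race, affecting both a first-stage binary decision $M$ (e.g. arrest) with potential outcomes $M(z)$ and a second-stage binary decision $Y$ (e.g. charging) with potential outcomes $Y(z,m)$; consistency relations $M=M(Z)$ and $Y=Y(Z,M)$ hold. A non-implication "A does not imply B" means there exists a joint distribution of $(X,Z,M(w),M(b),(Y(z,m))_{z,m})$ satisfying overlap and A but not B. *)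

theory Defs
  imports "HOL-Probability.Probability"
begin

datatype race = W | B

text \<open>A unit: covariate X (discrete, encoded in nat), treatment Z,
  potential mediators M(z), potential outcomes Y(z,m).\<close>
record unit =
  Xc   :: nat
  Zr   :: race
  Mpot :: "race \<Rightarrow> bool"
  Ypot :: "race \<Rightarrow> bool \<Rightarrow> bool"

definition Mobs :: "unit \<Rightarrow> bool" where
  "Mobs u = Mpot u (Zr u)"

definition Yobs :: "unit \<Rightarrow> bool" where
  "Yobs u = Ypot u (Zr u) (Mobs u)"

abbreviation Pr :: "unit pmf \<Rightarrow> unit set \<Rightarrow> real" where
  "Pr P S \<equiv> measure_pmf.prob P S"

definition cond_indep_ev ::
  "unit pmf \<Rightarrow> unit set \<Rightarrow> (unit \<Rightarrow> 'a) \<Rightarrow> (unit \<Rightarrow> 'b) \<Rightarrow> (unit \<Rightarrow> 'c) \<Rightarrow> bool" where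
  "cond_indep_ev P E A C D \<longleftrightarrow>
     (\<forall>a b c.
        Pr P {u. u \<in> E \<and> A u = a \<and> C u = b \<and> D u = c} * Pr P {u. u \<in> E \<and> D u = c}
      = Pr P {u. u \<in> E \<and> A u = a \<and> D u = c} * Pr P {u. u \<in> E \<and> C u = b \<and> D u = c})"

abbreviation cond_indep ::
  "unit pmf \<Rightarrow> (unit \<Rightarrow> 'a) \<Rightarrow> (unit \<Rightarrow> 'b) \<Rightarrow> (unit \<Rightarrow> 'c) \<Rightarrow> bool" where
  "cond_indep P A C D \<equiv> cond_indep_ev P UNIV A C D"

definition overlap :: "unit pmf \<Rightarrow> bool" where
  "overlap P \<longleftrightarrow> Pr P {u. Mobs u} > 0 \<and>
     (\<forall>x z. Pr P {u. Mobs u \<and> Xc u = x} > 0 \<longrightarrow> Pr P {u. Mobs u \<and> Xc u = x \<and> Zr u = z} > 0)"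

definition SeqI :: "unit pmf \<Rightarrow> bool" where
  "SeqI P \<longleftrightarrow> (\<forall>z z' m.
      cond_indep P (\<lambda>u. (Ypot u z' m, Mpot u z)) Zr Xc \<and>
      cond_indep P (\<lambda>u. Ypot u z' m) Mobs (\<lambda>u. (Zr u, Xc u)))"

definition SubI :: "unit pmf \<Rightarrow> bool" where
  "SubI P \<longleftrightarrow> (\<forall>z. cond_indep_ev P {u. Mobs u} (\<lambda>u. Ypot u z True) Zr Xc)"

definition TI :: "unit pmf \<Rightarrow> bool" where
  "TI P \<longleftrightarrow> (\<forall>z z' m.
      cond_indep P (\<lambda>u. Mpot u z) Zr Xc \<and>
      cond_indep P (\<lambda>u. Ypot u z' m) Zr (\<lambda>u. (Mpot u W, Mpot u B, Xc u)))"

definition MI :: "unit pmf \<Rightarrow> bool" where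
  "MI P \<longleftrightarrow> (\<forall>z m.
      cond_indep_ev P {u. Zr u = z \<and> Mpot u B} (\<lambda>u. Ypot u z m) (\<lambda>u. Mpot u W) Xc)"

definition MM :: "unit pmf \<Rightarrow> bool" where
  "MM P \<longleftrightarrow> (\<forall>u \<in> set_pmf P. Mpot u W \<longrightarrow> Mpot u B)"

definition CDE_Ob :: "unit pmf \<Rightarrow> real" where
  "CDE_Ob P = measure_pmf.expectation (cond_pmf P {u. Mobs u})
                 (\<lambda>u. of_bool (Ypot u B True) - of_bool (Ypot u W True))"

definition obs_dist :: "unit pmf \<Rightarrow> (nat \<times> race \<times> bool) pmf" where
  "obs_dist P = map_pmf (\<lambda>u. (Xc u, Zr u, Yobs u)) (cond_pmf P {u. Mobs u})"

text \<open>Stratified difference-in-means estimator from a sample list of length n.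
  Division by zero yields 0 (Isabelle convention).\<close>
definition n_x :: "(nat \<times> race \<times> bool) list \<Rightarrow> nat \<Rightarrow> nat" where
  "n_x xs x = length (filter (\<lambda>(x', z', y). x' = x) xs)"

definition n_zx :: "(nat \<times> race \<times> bool) list \<Rightarrow> race \<Rightarrow> nat \<Rightarrow> nat" where
  "n_zx xs z x = length (filter (\<lambda>(x', z', y). z' = z \<and> x' = x) xs)"

definition ybar :: "(nat \<times> race \<times> bool) list \<Rightarrow> race \<Rightarrow> nat \<Rightarrow> real" where
  "ybar xs z x = (1 / real (n_zx xs z x)) *
      (\<Sum>(x', z', y) \<leftarrow> filter (\<lambda>(x', z', y). z' = z \<and> x' = x) xs. of_bool y)"

definition Delta :: "(nat \<times> race \<times> bool) list \<Rightarrow> real" where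
  "Delta xs =
     (\<Sum>x \<in> fst ` set xs. ybar xs B x * (real (n_x xs x) / real (length xs)))
   - (\<Sum>x \<in> fst ` set xs. ybar xs W x * (real (n_x xs x) / real (length xs)))"

definition consistent :: "unit pmf \<Rightarrow> bool" where
  "consistent P \<longleftrightarrow>
     (AE \<omega> in stream_space (measure_pmf (obs_dist P)).
        (\<lambda>n. Delta (stake n \<omega>)) \<longlonglongrightarrow> CDE_Ob P)"

end

theory Submission
  imports Defs
begin

lemma snth_to_stream[simp]: "to_stream X !! i = X i"
  by (simp add: to_stream_def)

lemma stream_component:
  assumes "prob_space M"
  shows "distr (stream_space M) M (\<lambda>\<omega>. \<omega> !! i) = M"
proof -
  interpret product_prob_space "\<lambda>_. M" UNIV
    using assms by (simp add: product_prob_space_def product_sigma_finite_def prob_space_imp_sigma_finite product_prob_space_axioms_def)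
  have "distr (stream_space M) M (\<lambda>\<omega>. \<omega> !! i) = distr (distr (\<Pi>\<^sub>M i\<in>UNIV. M) (stream_space M) to_stream) M (\<lambda>\<omega>. \<omega> !! i)"
    by (subst stream_space_eq_distr) simp
  also have "\<dots> = distr (\<Pi>\<^sub>M i\<in>UNIV. M) M ((\<lambda>\<omega>. \<omega> !! i) \<circ> to_stream)"
    by (rule distr_distr) auto
  also have "\<dots> = distr (\<Pi>\<^sub>M i\<in>UNIV. M) M (\<lambda>X. X i)"
    by (simp add: o_def)
  also have "\<dots> = M" using PiM_component[of i] by simp
  finally show ?thesis .
qed

lemma stream_indep:
  assumes "prob_space M"
  shows "prob_space.indep_vars (stream_space M) (\<lambda>_. M) (\<lambda>i \<omega>. \<omega> !! i) UNIV"
proof -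
  interpret product_prob_space "\<lambda>_. M" UNIV
    using assms by (simp add: product_prob_space_def product_sigma_finite_def prob_space_imp_sigma_finite product_prob_space_axioms_def)
  interpret S: prob_space "stream_space M"
    using assms by (rule prob_space.prob_space_stream_space)
  have "distr (stream_space M) (\<Pi>\<^sub>M i\<in>UNIV. M) (\<lambda>x. \<lambda>i\<in>UNIV. x !! i) = distr (distr (\<Pi>\<^sub>M i\<in>UNIV. M) (stream_space M) to_stream) (\<Pi>\<^sub>M i\<in>UNIV. M) (\<lambda>x. \<lambda>i\<in>UNIV. x !! i)"
    by (subst stream_space_eq_distr) simp
  also have "\<dots> = distr (\<Pi>\<^sub>M i\<in>UNIV. M) (\<Pi>\<^sub>M i\<in>UNIV. M) ((\<lambda>x. \<lambda>i\<in>UNIV. x !! i) \<circ> to_stream)"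
    by (rule distr_distr) auto
  also have "\<dots> = distr (\<Pi>\<^sub>M i\<in>UNIV. M) (\<Pi>\<^sub>M i\<in>UNIV. M) (\<lambda>x. x)"
    by (rule arg_cong[where f="distr _ _"]) (auto simp: o_def restrict_def fun_eq_iff)
  also have "\<dots> = (\<Pi>\<^sub>M i\<in>UNIV. M)" by (simp add: distr_id2)
  also have "\<dots> = (\<Pi>\<^sub>M i\<in>UNIV. distr (stream_space M) M (\<lambda>\<omega>. \<omega> !! i))"
    using stream_component[OF assms] by simp
  finally show ?thesis
    by (subst S.indep_vars_iff_distr_eq_PiM) auto
qed

lemma hoeffding_stream:
  fixes D :: "'a pmf" and f :: "'a \<Rightarrow> real"
  assumes f01: "\<And>x. f x \<in> {0..1}" and n: "n > 0" and eps: "\<epsilon> \<ge> 0"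
  shows "measure (stream_space (measure_pmf D))
           {\<omega> \<in> space (stream_space (measure_pmf D)). \<bar>(\<Sum>i\<in>{..<n}. f (\<omega> !! i)) / real n - measure_pmf.expectation D f\<bar> \<ge> \<epsilon>}
         \<le> 2 * exp (-2 * real n * \<epsilon>\<^sup>2)"
proof -
  let ?M = "measure_pmf D"
  let ?S = "stream_space ?M"
  interpret S: prob_space ?S
    by (rule prob_space.prob_space_stream_space) (rule measure_pmf.prob_space_axioms)
  have [measurable]: "f \<in> borel_measurable ?M" by simp
  have comp: "distr ?S ?M (\<lambda>\<omega>. \<omega> !! i) = ?M" for i
    by (rule stream_component) (rule measure_pmf.prob_space_axioms)
  have dX: "distr ?S borel (\<lambda>\<omega>. f (\<omega> !! i)) = distr ?M borel f" for i
  proof -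
    have "distr ?S borel (\<lambda>\<omega>. f (\<omega> !! i)) = distr ?S borel (f \<circ> (\<lambda>\<omega>. \<omega> !! i))" by (simp add: o_def)
    also have "\<dots> = distr (distr ?S ?M (\<lambda>\<omega>. \<omega> !! i)) borel f"
      by (rule distr_distr[symmetric]) auto
    also have "\<dots> = distr ?M borel f" by (simp add: comp)
    finally show ?thesis .
  qed
  have indep: "S.indep_vars (\<lambda>_. borel) (\<lambda>i \<omega>. f (\<omega> !! i)) UNIV"
    by (rule S.indep_vars_compose2[OF stream_indep]) (auto intro: measure_pmf.prob_space_axioms)
  have ex: "measure_pmf.expectation D f = S.expectation (\<lambda>\<omega>. f (\<omega> !! 0))"
  proof -
    have "S.expectation (\<lambda>\<omega>. f (\<omega> !! 0)) = integral\<^sup>L (distr ?S ?M (\<lambda>\<omega>. \<omega> !! 0)) f"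
      by (rule integral_distr[symmetric]) auto
    then show ?thesis using comp[of 0] by simp
  qed
  interpret H: Hoeffding_ineq_iid ?S "{..<n}" "\<lambda>i \<omega>. f (\<omega> !! i)" "\<lambda>\<omega>. f (\<omega> !! 0)" 0 1 "measure_pmf.expectation D f"
  proof unfold_locales
    show "S.indep_vars (\<lambda>_. borel) (\<lambda>i \<omega>. f (\<omega> !! i)) {..<n}"
      by (rule S.indep_vars_subset[OF indep]) auto
    show "distr ?S borel (\<lambda>\<omega>. f (\<omega> !! i)) = distr ?S borel (\<lambda>\<omega>. f (\<omega> !! 0))" for i
      using dX[of i] dX[of 0] by simp
    show "AE x in ?S. f (x !! 0) \<in> {0..1}" using f01 by simp
    show "measure_pmf.expectation D f \<equiv> S.expectation (\<lambda>\<omega>. f (\<omega> !! 0))" using ex by simp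
  qed auto
  have "{..<n} \<noteq> {}" using n by auto
  from H.Hoeffding_ineq_abs_ge'[OF eps _ this] show ?thesis by simp
qed

lemma slln_bounded:
  fixes D :: "'a pmf" and f :: "'a \<Rightarrow> real"
  assumes f01: "\<And>x. f x \<in> {0..1}"
  shows "AE \<omega> in stream_space (measure_pmf D).
           (\<lambda>n. (\<Sum>i<n. f (\<omega> !! i)) / real n) \<longlonglongrightarrow> measure_pmf.expectation D f"
proof -
  let ?M = "measure_pmf D"
  let ?S = "stream_space ?M"
  let ?mu = "measure_pmf.expectation D f"
  interpret S: prob_space ?S
    by (rule prob_space.prob_space_stream_space) (rule measure_pmf.prob_space_axioms)
  have [measurable]: "f \<in> borel_measurable ?M" by simp
  have ev: "AE \<omega> in ?S. eventually (\<lambda>n. \<bar>(\<Sum>i<Suc n. f (\<omega> !! i)) / real (Suc n) - ?mu\<bar> < e) sequentially"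
    if e: "e > 0" for e
  proof -
    define A where "A n = {\<omega> \<in> space ?S. \<bar>(\<Sum>i\<in>{..<Suc n}. f (\<omega> !! i)) / real (Suc n) - ?mu\<bar> \<ge> e}" for n
    have [measurable]: "A n \<in> sets ?S" for n unfolding A_def by measurable
    have bnd: "measure ?S (A n) \<le> 2 * exp (-2 * e\<^sup>2) ^ Suc n" for n
    proof -
      have "measure ?S (A n) \<le> 2 * exp (-2 * real (Suc n) * e\<^sup>2)"
        unfolding A_def by (rule hoeffding_stream) (use f01 e in auto)
      also have "exp (-2 * real (Suc n) * e\<^sup>2) = exp (-2 * e\<^sup>2) ^ Suc n"
        by (subst exp_of_nat_mult[symmetric]) (simp add: algebra_simps)
      finally show ?thesis by simp
    qed
    have q: "exp (-2 * e\<^sup>2) < 1" using e by simp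
    have "summable (\<lambda>n. 2 * exp (-2 * e\<^sup>2) ^ Suc n)"
      by (rule summable_mult) (use q in \<open>simp add: summable_geometric_iff\<close>)
    then have "summable (\<lambda>n. measure ?S (A n))"
      by (rule summable_comparison_test'[where N=0]) (use bnd in auto)
    from borel_cantelli_AE1[OF _ _ this]
    have "AE \<omega> in ?S. eventually (\<lambda>n. \<omega> \<in> space ?S - A n) sequentially"
      by (simp add: S.emeasure_eq_measure)
    then show ?thesis
      by (rule AE_mp) (auto simp: A_def elim!: eventually_mono intro!: AE_I2)
  qed
  have "AE \<omega> in ?S. \<forall>k::nat. eventually (\<lambda>n. \<bar>(\<Sum>i<Suc n. f (\<omega> !! i)) / real (Suc n) - ?mu\<bar> < 1 / real (Suc k)) sequentially"
    by (subst AE_all_countable) (intro allI ev, simp)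
  then show ?thesis
  proof (rule AE_mp, intro AE_I2 impI)
    fix \<omega> assume H: "\<forall>k::nat. eventually (\<lambda>n. \<bar>(\<Sum>i<Suc n. f (\<omega> !! i)) / real (Suc n) - ?mu\<bar> < 1 / real (Suc k)) sequentially"
    have "(\<lambda>n. (\<Sum>i<Suc n. f (\<omega> !! i)) / real (Suc n)) \<longlonglongrightarrow> ?mu"
    proof (rule tendstoI)
      fix e :: real assume e: "e > 0"
      obtain k :: nat where k: "1 / real (Suc k) < e"
        using e by (metis nat_approx_posE)
      show "eventually (\<lambda>n. dist ((\<Sum>i<Suc n. f (\<omega> !! i)) / real (Suc n)) ?mu < e) sequentially"
        using H[rule_format, of k] by (rule eventually_mono) (use k in \<open>auto simp: dist_real_def\<close>)
    qed
    then show "(\<lambda>n. (\<Sum>i<n. f (\<omega> !! i)) / real n) \<longlonglongrightarrow> ?mu"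
      by (rule LIMSEQ_imp_Suc)
  qed
qed

declare sum_of_bool_eq[simp del]

lemma length_filter_stake:
  "real (length (filter p (stake n \<omega>))) = (\<Sum>i<n. of_bool (p (\<omega> !! i)))"
  by (induction n) (simp_all add: stake_Suc del: stake.simps(2))

lemma sum_list_filter_stake:
  "sum_list (map f (filter p (stake n \<omega>))) = (\<Sum>i<n. if p (\<omega> !! i) then f (\<omega> !! i) else (0::real))"
  by (induction n) (simp_all add: stake_Suc del: stake.simps(2))

definition cx :: "(nat \<times> race \<times> bool) stream \<Rightarrow> nat \<Rightarrow> nat \<Rightarrow> real" where
  "cx \<omega> n x = (\<Sum>i<n. of_bool (fst (\<omega> !! i) = x))"
definition czx :: "(nat \<times> race \<times> bool) stream \<Rightarrow> nat \<Rightarrow> race \<Rightarrow> nat \<Rightarrow> real" where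
  "czx \<omega> n z x = (\<Sum>i<n. of_bool (fst (\<omega> !! i) = x \<and> fst (snd (\<omega> !! i)) = z))"
definition cy :: "(nat \<times> race \<times> bool) stream \<Rightarrow> nat \<Rightarrow> race \<Rightarrow> nat \<Rightarrow> real" where
  "cy \<omega> n z x = (\<Sum>i<n. of_bool (fst (\<omega> !! i) = x \<and> fst (snd (\<omega> !! i)) = z \<and> snd (snd (\<omega> !! i))))"

lemma n_x_stake: "real (n_x (stake n \<omega>) x) = cx \<omega> n x"
  unfolding n_x_def cx_def length_filter_stake by (simp add: case_prod_beta)

lemma n_zx_stake: "real (n_zx (stake n \<omega>) z x) = czx \<omega> n z x"
  unfolding n_zx_def czx_def length_filter_stake by (intro sum.cong) (auto simp: case_prod_beta)

lemma ybar_stake: "ybar (stake n \<omega>) z x = cy \<omega> n z x / czx \<omega> n z x"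
  unfolding ybar_def n_zx_stake sum_list_filter_stake cy_def czx_def
  by (auto simp: case_prod_beta intro!: sum.cong)

lemma set_stake_eq: "set (stake n \<omega>) = (\<lambda>i. \<omega> !! i) ` {..<n}"
  by (force simp: set_conv_nth)

lemma Delta_stake:
  "Delta (stake n \<omega>) = (\<Sum>x\<in>fst ` set (stake n \<omega>).
      (cy \<omega> n B x / czx \<omega> n B x - cy \<omega> n W x / czx \<omega> n W x) * (cx \<omega> n x / real n))"
  unfolding Delta_def ybar_stake n_x_stake length_stake sum_subtractf[symmetric]
  by (intro sum.cong) (auto simp: algebra_simps)

lemma cy_le_czx: "0 \<le> cy \<omega> n z x" "cy \<omega> n z x \<le> czx \<omega> n z x"
  unfolding cy_def czx_def by (auto intro!: sum_nonneg sum_mono)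

lemma czx_le_cx: "czx \<omega> n z x \<le> cx \<omega> n x"
  unfolding cx_def czx_def by (auto intro!: sum_mono)

lemma ratio01: "0 \<le> cy \<omega> n z x / czx \<omega> n z x" "cy \<omega> n z x / czx \<omega> n z x \<le> 1"
  using cy_le_czx[of \<omega> n z x] by (auto simp: divide_le_eq_1)

lemma cx_nonneg: "0 \<le> cx \<omega> n x" unfolding cx_def by (auto intro!: sum_nonneg)

lemma cx_zero: "x \<notin> fst ` set (stake n \<omega>) \<Longrightarrow> cx \<omega> n x = 0"
  unfolding cx_def set_stake_eq by (auto intro!: sum.neutral)

lemma sum_cx: "(\<Sum>x\<in>fst ` set (stake n \<omega>). cx \<omega> n x) = real n"
proof -
  have "(\<Sum>x\<in>fst ` set (stake n \<omega>). cx \<omega> n x) = (\<Sum>i<n. \<Sum>x\<in>fst ` set (stake n \<omega>). of_bool (fst (\<omega> !! i) = x))"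
    unfolding cx_def by (rule sum.swap)
  also have "\<dots> = (\<Sum>i<n. 1)"
  proof (intro sum.cong refl)
    fix i assume "i \<in> {..<n}"
    then have "fst (\<omega> !! i) \<in> fst ` set (stake n \<omega>)" unfolding set_stake_eq by auto
    then show "(\<Sum>x\<in>fst ` set (stake n \<omega>). of_bool (fst (\<omega> !! i) = x)) = (1::real)"
      by (simp add: of_bool_def sum.delta sum.delta')
  qed
  finally show ?thesis by simp
qed

lemma Delta_conv:
  fixes \<omega> :: "(nat \<times> race \<times> bool) stream"
  assumes px: "\<And>x. (\<lambda>n. cx \<omega> n x / real n) \<longlonglongrightarrow> p x"
  and pzx: "\<And>z x. (\<lambda>n. czx \<omega> n z x / real n) \<longlonglongrightarrow> pz z x"
  and qzx: "\<And>z x. (\<lambda>n. cy \<omega> n z x / real n) \<longlonglongrightarrow> q z x"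
  and psum: "p sums 1"
  and pos: "\<And>x z. p x > 0 \<Longrightarrow> pz z x > 0"
  and gdef: "\<And>x. g x = p x * (q B x / pz B x - q W x / pz W x)"
  and gsum: "g sums L"
  shows "(\<lambda>n. Delta (stake n \<omega>)) \<longlonglongrightarrow> L"
proof -
  define G where "G n x = (cy \<omega> n B x / czx \<omega> n B x - cy \<omega> n W x / czx \<omega> n W x) * (cx \<omega> n x / real n)" for n x
  have p_nonneg: "0 \<le> p x" for x
    by (rule LIMSEQ_le_const[OF px]) (auto intro!: divide_nonneg_nonneg cx_nonneg)
  have q_nonneg: "0 \<le> q z x" for z x
    by (rule LIMSEQ_le_const[OF qzx]) (auto intro!: divide_nonneg_nonneg cy_le_czx)
  have q_le: "q z x \<le> pz z x" for z x
    by (rule LIMSEQ_le[OF qzx pzx]) (auto intro!: divide_right_mono cy_le_czx)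
  have gbound: "\<bar>g x\<bar> \<le> p x" for x
  proof (cases "p x > 0")
    case True
    then have "pz B x > 0" "pz W x > 0" using pos by auto
    then have "0 \<le> q B x / pz B x" "q B x / pz B x \<le> 1" "0 \<le> q W x / pz W x" "q W x / pz W x \<le> 1"
      using q_nonneg q_le by auto
    then have "\<bar>q B x / pz B x - q W x / pz W x\<bar> \<le> 1" by linarith
    then have "\<bar>g x\<bar> \<le> p x * 1" unfolding gdef abs_mult using p_nonneg[of x]
      using mult_left_mono[of "\<bar>q B x / pz B x - q W x / pz W x\<bar>" 1 "p x"] by simp
    then show ?thesis by simp
  next
    case False
    then have "p x = 0" using p_nonneg[of x] by linarith
    then show ?thesis by (simp add: gdef)
  qed
  have Gbound: "\<bar>G n x\<bar> \<le> cx \<omega> n x / real n" for n x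
  proof -
    have "\<bar>cy \<omega> n B x / czx \<omega> n B x - cy \<omega> n W x / czx \<omega> n W x\<bar> \<le> 1"
      using ratio01[of \<omega> n B x] ratio01[of \<omega> n W x] by linarith
    then have "\<bar>G n x\<bar> \<le> 1 * (cx \<omega> n x / real n)"
    proof -
      have nn: "0 \<le> cx \<omega> n x / real n" using cx_nonneg[of \<omega> n x] by simp
      show ?thesis unfolding G_def abs_mult abs_of_nonneg[OF nn]
        by (rule mult_right_mono[OF _ nn]) fact
    qed
    then show ?thesis by simp
  qed
  have Gconv: "(\<lambda>n. G n x) \<longlonglongrightarrow> g x" for x
  proof (cases "p x > 0")
    case True
    then have pzB: "pz B x \<noteq> 0" and pzW: "pz W x \<noteq> 0" using pos by (auto simp: less_le)
    have "(\<lambda>n. ((cy \<omega> n B x / real n) / (czx \<omega> n B x / real n) - (cy \<omega> n W x / real n) / (czx \<omega> n W x / real n)) * (cx \<omega> n x / real n))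
          \<longlonglongrightarrow> (q B x / pz B x - q W x / pz W x) * p x"
      by (intro tendsto_intros px pzx qzx pzB pzW)
    then have "(\<lambda>n. ((cy \<omega> n B x / real n) / (czx \<omega> n B x / real n) - (cy \<omega> n W x / real n) / (czx \<omega> n W x / real n)) * (cx \<omega> n x / real n))
          \<longlonglongrightarrow> g x" by (simp add: gdef mult.commute)
    moreover have "eventually (\<lambda>n. ((cy \<omega> n B x / real n) / (czx \<omega> n B x / real n) - (cy \<omega> n W x / real n) / (czx \<omega> n W x / real n)) * (cx \<omega> n x / real n) = G n x) sequentially"
      using eventually_gt_at_top[of 0] by (rule eventually_mono) (simp add: G_def)
    ultimately show ?thesis by (rule Lim_transform_eventually)
  next
    case False
    then have "p x = 0" using p_nonneg[of x] by linarith
    then have g0: "g x = 0" by (simp add: gdef)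
    have "(\<lambda>n. G n x) \<longlonglongrightarrow> 0"
      by (rule Lim_null_comparison[where g="\<lambda>n. cx \<omega> n x / real n"])
         (use Gbound px[of x] \<open>p x = 0\<close> in auto)
    then show ?thesis by (simp add: g0)
  qed
  have decomp: "Delta (stake n \<omega>) = (\<Sum>x<N. G n x) + (\<Sum>x\<in>fst ` set (stake n \<omega>) - {..<N}. G n x)" for n N
  proof -
    let ?S = "fst ` set (stake n \<omega>)"
    have "Delta (stake n \<omega>) = (\<Sum>x\<in>?S. G n x)" unfolding Delta_stake G_def ..
    also have "\<dots> = (\<Sum>x\<in>?S \<inter> {..<N}. G n x) + (\<Sum>x\<in>?S - {..<N}. G n x)"
      by (rule sum.Int_Diff) simp
    also have "(\<Sum>x\<in>?S \<inter> {..<N}. G n x) = (\<Sum>x<N. G n x)"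
      by (rule sum.mono_neutral_left) (use cx_zero in \<open>auto simp: G_def\<close>)
    finally show ?thesis .
  qed
  have tail: "\<bar>\<Sum>x\<in>fst ` set (stake n \<omega>) - {..<N}. G n x\<bar> \<le> 1 - (\<Sum>x<N. cx \<omega> n x / real n)"
    if n: "n > 0" for n N
  proof -
    let ?S = "fst ` set (stake n \<omega>)"
    have "\<bar>\<Sum>x\<in>?S - {..<N}. G n x\<bar> \<le> (\<Sum>x\<in>?S - {..<N}. \<bar>G n x\<bar>)" by (rule sum_abs)
    also have "\<dots> \<le> (\<Sum>x\<in>?S - {..<N}. cx \<omega> n x / real n)" by (intro sum_mono Gbound)
    also have "(\<Sum>x\<in>?S - {..<N}. cx \<omega> n x / real n) = (\<Sum>x\<in>?S. cx \<omega> n x / real n) - (\<Sum>x\<in>?S \<inter> {..<N}. cx \<omega> n x / real n)"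
      using sum.Int_Diff[of ?S "\<lambda>x. cx \<omega> n x / real n" "{..<N}"] by simp
    also have "(\<Sum>x\<in>?S. cx \<omega> n x / real n) = 1"
      using n by (simp add: sum_divide_distrib[symmetric] sum_cx)
    also have "(\<Sum>x\<in>?S \<inter> {..<N}. cx \<omega> n x / real n) = (\<Sum>x<N. cx \<omega> n x / real n)"
      by (rule sum.mono_neutral_left) (use cx_zero in auto)
    finally show ?thesis .
  qed
  have Lsplit: "\<bar>L - (\<Sum>x<N. g x)\<bar> \<le> 1 - (\<Sum>x<N. p x)" for N
  proof -
    have g1: "(\<lambda>i. g (i + N)) sums (L - (\<Sum>x<N. g x))" by (rule sums_split_initial_segment[OF gsum])
    have p1: "(\<lambda>i. p (i + N)) sums (1 - (\<Sum>x<N. p x))" by (rule sums_split_initial_segment[OF psum])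
    have "L - (\<Sum>x<N. g x) \<le> 1 - (\<Sum>x<N. p x)"
      by (rule sums_le[OF _ g1 p1]) (use gbound in \<open>auto simp: abs_le_iff\<close>)
    moreover have "-(1 - (\<Sum>x<N. p x)) \<le> L - (\<Sum>x<N. g x)"
    proof (rule sums_le[OF _ sums_minus[OF p1] g1])
      fix i show "- p (i + N) \<le> g (i + N)" using gbound[of "i + N"] by linarith
    qed
    ultimately show ?thesis by linarith
  qed
  show ?thesis
  proof (rule tendstoI)
    fix e :: real assume e: "e > 0"
    have "(\<lambda>N. \<Sum>x<N. p x) \<longlonglongrightarrow> 1" using psum by (simp add: sums_def)
    from tendstoD[OF this, of "e/4"] e obtain N where N: "dist (\<Sum>x<N. p x) 1 < e/4"
      by (auto simp: eventually_sequentially)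
    have "(\<lambda>n. \<Sum>x<N. G n x) \<longlonglongrightarrow> (\<Sum>x<N. g x)" by (intro tendsto_sum Gconv)
    from tendstoD[OF this, of "e/4"] e
    have ev1: "eventually (\<lambda>n. dist (\<Sum>x<N. G n x) (\<Sum>x<N. g x) < e/4) sequentially" by simp
    have "(\<lambda>n. \<Sum>x<N. cx \<omega> n x / real n) \<longlonglongrightarrow> (\<Sum>x<N. p x)" by (intro tendsto_sum px)
    from tendstoD[OF this, of "e/4"] e
    have ev2: "eventually (\<lambda>n. dist (\<Sum>x<N. cx \<omega> n x / real n) (\<Sum>x<N. p x) < e/4) sequentially" by simp
    show "eventually (\<lambda>n. dist (Delta (stake n \<omega>)) L < e) sequentially"
      using ev1 ev2 eventually_gt_at_top[of 0]
    proof eventually_elim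
      case (elim n)
      have t: "\<bar>\<Sum>x\<in>fst ` set (stake n \<omega>) - {..<N}. G n x\<bar> \<le> 1 - (\<Sum>x<N. cx \<omega> n x / real n)"
        using tail elim(3) by blast
      have ls: "\<bar>L - (\<Sum>x<N. g x)\<bar> \<le> 1 - (\<Sum>x<N. p x)" by (rule Lsplit)
      have A: "\<bar>(\<Sum>x<N. G n x) - (\<Sum>x<N. g x)\<bar> < e/4" using elim(1) by (simp add: dist_real_def)
      have Bq: "\<bar>(\<Sum>x<N. cx \<omega> n x / real n) - (\<Sum>x<N. p x)\<bar> < e/4" using elim(2) by (simp add: dist_real_def)
      have C: "\<bar>(\<Sum>x<N. p x) - 1\<bar> < e/4" using N by (simp add: dist_real_def)
      have "\<bar>Delta (stake n \<omega>) - L\<bar> < e"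
        unfolding decomp[of n N] using A Bq C t ls unfolding abs_less_iff abs_le_iff by linarith
      then show ?case by (simp add: dist_real_def)
    qed
  qed
qed

lemma prob_cond_pmf:
  assumes "Pr P S > 0"
  shows "measure_pmf.prob (cond_pmf P S) A = Pr P (S \<inter> A) / Pr P S"
proof -
  have ne: "set_pmf P \<inter> S \<noteq> {}"
  proof
    assume "set_pmf P \<inter> S = {}"
    then have "Pr P (S \<inter> set_pmf P) = 0" by (simp add: Int_commute)
    then show False using assms by (simp add: measure_Int_set_pmf)
  qed
  have "emeasure (measure_pmf P) S \<noteq> 0" using assms
    by (simp add: measure_pmf.emeasure_eq_measure)
  then show ?thesis
    by (simp add: cond_pmf.rep_eq[OF ne] measure_pmf.emeasure_eq_measure)
qed

lemma expect_of_bool: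
  "measure_pmf.expectation D (\<lambda>t. of_bool (\<phi> t) :: real) = measure_pmf.prob D {t. \<phi> t}"
proof -
  have "(\<lambda>t. of_bool (\<phi> t) :: real) = indicator {t. \<phi> t}" by (auto simp: indicator_def fun_eq_iff)
  then show ?thesis by simp
qed

lemma slln_of_bool:
  "AE \<omega> in stream_space (measure_pmf D).
     (\<lambda>n. (\<Sum>i<n. of_bool (\<phi> (\<omega> !! i))) / real n) \<longlonglongrightarrow> measure_pmf.prob D {t. \<phi> t}"
  using slln_bounded[of "\<lambda>t. of_bool (\<phi> t)" D] by (simp add: expect_of_bool)

lemma sums_partition:
  fixes D :: "'a pmf" and h :: "'a \<Rightarrow> nat"
  shows "(\<lambda>x. measure_pmf.prob D {t. \<phi> t \<and> h t = x}) sums measure_pmf.prob D {t. \<phi> t}"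
proof -
  have "(\<lambda>x. measure_pmf.prob D {t. \<phi> t \<and> h t = x}) sums measure_pmf.prob D (\<Union>x. {t. \<phi> t \<and> h t = x})"
    by (rule measure_UNION) (auto simp: disjoint_family_on_def)
  moreover have "(\<Union>x. {t. \<phi> t \<and> h t = x}) = {t. \<phi> t}" by auto
  ultimately show ?thesis by simp
qed

definition KEY :: "unit pmf \<Rightarrow> bool" where
  "KEY P \<longleftrightarrow> (\<forall>z x. Pr P {u. Mobs u \<and> Ypot u z True \<and> Xc u = x} * Pr P {u. Mobs u \<and> Zr u = z \<and> Xc u = x}
     = Pr P {u. Mobs u \<and> Ypot u z True \<and> Zr u = z \<and> Xc u = x} * Pr P {u. Mobs u \<and> Xc u = x})"

lemma KEY_consistent:
  assumes ov: "overlap P" and key: "KEY P"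
  shows "consistent P"
proof -
  let ?D = "obs_dist P"
  let ?S = "stream_space (measure_pmf ?D)"
  let ?Q = "cond_pmf P {u. Mobs u}"
  define Mm where "Mm = Pr P {u. Mobs u}"
  have Mm: "Mm > 0" using ov by (simp add: overlap_def Mm_def)
  have Qp: "measure_pmf.prob ?Q {u. \<phi> u} = Pr P {u. Mobs u \<and> \<phi> u} / Mm" for \<phi>
    using prob_cond_pmf[of P "{u. Mobs u}" "{u. \<phi> u}"] Mm unfolding Mm_def
    by (simp add: Int_def)
  have Dp: "measure_pmf.prob ?D {t. \<psi> t} = Pr P {u. Mobs u \<and> \<psi> (Xc u, Zr u, Yobs u)} / Mm" for \<psi>
    unfolding obs_dist_def measure_map_pmf vimage_def using Qp[of "\<lambda>u. \<psi> (Xc u, Zr u, Yobs u)"] by simp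
  define p where "p x = measure_pmf.prob ?D {t. fst t = x}" for x
  define pz where "pz z x = measure_pmf.prob ?D {t. fst t = x \<and> fst (snd t) = z}" for z x
  define q where "q z x = measure_pmf.prob ?D {t. fst t = x \<and> fst (snd t) = z \<and> snd (snd t)}" for z x
  have p_eq: "p x = Pr P {u. Mobs u \<and> Xc u = x} / Mm" for x
    unfolding p_def Dp by simp
  have pz_eq: "pz z x = Pr P {u. Mobs u \<and> Zr u = z \<and> Xc u = x} / Mm" for z x
    unfolding pz_def Dp by (simp add: conj_commute)
  have q_eq: "q z x = Pr P {u. Mobs u \<and> Ypot u z True \<and> Zr u = z \<and> Xc u = x} / Mm" for z x
  proof -
    have "{u. Mobs u \<and> Xc u = x \<and> Zr u = z \<and> Yobs u} = {u. Mobs u \<and> Ypot u z True \<and> Zr u = z \<and> Xc u = x}"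
      by (auto simp: Yobs_def)
    then show ?thesis unfolding q_def Dp by simp
  qed
  define Yq where "Yq z x = Pr P {u. Mobs u \<and> Ypot u z True \<and> Xc u = x} / Mm" for z x
  have psum: "p sums 1"
  proof -
    have "(\<lambda>x. measure_pmf.prob ?D {t. True \<and> fst t = x}) sums measure_pmf.prob ?D {t. True}"
      by (rule sums_partition)
    then show ?thesis unfolding p_def by simp
  qed
  have pos: "pz z x > 0" if "p x > 0" for x z
  proof -
    have "Pr P {u. Mobs u \<and> Xc u = x} > 0" using that Mm by (simp add: p_eq zero_less_divide_iff)
    then have "Pr P {u. Mobs u \<and> Xc u = x \<and> Zr u = z} > 0" using ov by (simp add: overlap_def)
    moreover have "{u. Mobs u \<and> Xc u = x \<and> Zr u = z} = {u. Mobs u \<and> Zr u = z \<and> Xc u = x}" by auto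
    ultimately show ?thesis using Mm by (simp add: pz_eq)
  qed
  have Yq_eq: "Yq z x = p x * (q z x / pz z x)" for z x
  proof (cases "pz z x > 0")
    case True
    have k: "Pr P {u. Mobs u \<and> Ypot u z True \<and> Xc u = x} * Pr P {u. Mobs u \<and> Zr u = z \<and> Xc u = x}
     = Pr P {u. Mobs u \<and> Ypot u z True \<and> Zr u = z \<and> Xc u = x} * Pr P {u. Mobs u \<and> Xc u = x}"
      using key by (simp add: KEY_def)
    have "Yq z x * pz z x = q z x * p x"
      unfolding Yq_def pz_eq q_eq p_eq using k by (simp add: field_simps)
    then show ?thesis using True by (simp add: field_simps)
  next
    case False
    then have "p x = 0" using pos[of x z] p_eq[of x] Mm
      by (metis divide_nonneg_pos linorder_neqE_linordered_idom measure_nonneg not_less)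
    moreover have "Yq z x \<le> p x"
      unfolding Yq_def p_eq using Mm
      by (intro divide_right_mono measure_pmf.finite_measure_mono) auto
    moreover have "Yq z x \<ge> 0" unfolding Yq_def using Mm by simp
    ultimately show ?thesis by simp
  qed
  define g where "g x = Yq B x - Yq W x" for x
  have gdef: "g x = p x * (q B x / pz B x - q W x / pz W x)" for x
    unfolding g_def Yq_eq by (simp add: algebra_simps)
  have CDE: "CDE_Ob P = measure_pmf.prob ?Q {u. Ypot u B True} - measure_pmf.prob ?Q {u. Ypot u W True}"
  proof -
    have i: "integrable (measure_pmf ?Q) (\<lambda>u. of_bool (Ypot u z True) :: real)" for z
      by (rule measure_pmf.integrable_const_bound[where B=1]) auto
    show ?thesis unfolding CDE_Ob_def
      by (subst Bochner_Integration.integral_diff[OF i i]) (simp add: expect_of_bool)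
  qed
  have Ysum: "Yq z sums measure_pmf.prob ?Q {u. Ypot u z True}" for z
  proof -
    have "(\<lambda>x. measure_pmf.prob ?Q {u. Ypot u z True \<and> Xc u = x}) sums measure_pmf.prob ?Q {u. Ypot u z True}"
      by (rule sums_partition)
    then show ?thesis unfolding Qp Yq_def by (simp add: conj_assoc)
  qed
  have gsum: "g sums CDE_Ob P" unfolding g_def CDE by (intro sums_diff Ysum)
  have a1: "AE \<omega> in ?S. \<forall>x. (\<lambda>n. cx \<omega> n x / real n) \<longlonglongrightarrow> p x"
    unfolding AE_all_countable cx_def p_def by (intro allI slln_of_bool)
  have a2: "AE \<omega> in ?S. \<forall>x. (\<lambda>n. czx \<omega> n z x / real n) \<longlonglongrightarrow> pz z x" for z
    unfolding AE_all_countable czx_def pz_def by (intro allI slln_of_bool)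
  have a3: "AE \<omega> in ?S. \<forall>x. (\<lambda>n. cy \<omega> n z x / real n) \<longlonglongrightarrow> q z x" for z
    unfolding AE_all_countable cy_def q_def by (intro allI slln_of_bool)
  show ?thesis unfolding consistent_def
    using a1 a2[of W] a2[of B] a3[of W] a3[of B]
  proof eventually_elim
    case (elim \<omega>)
    have pzx: "(\<lambda>n. czx \<omega> n z x / real n) \<longlonglongrightarrow> pz z x" for z x
      using elim by (cases z) auto
    have qzx: "(\<lambda>n. cy \<omega> n z x / real n) \<longlonglongrightarrow> q z x" for z x
      using elim by (cases z) auto
    show ?case
      by (rule Delta_conv[where p=p and pz=pz and q=q and g=g]) (use elim pzx qzx psum pos gdef gsum in auto)
  qed
qed

lemma pr_split: "Pr P {u. \<phi> u} = Pr P {u. \<phi> u \<and> \<psi> u} + Pr P {u. \<phi> u \<and> \<not> \<psi> u}"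
proof -
  have "{u. \<phi> u} = {u. \<phi> u \<and> \<psi> u} \<union> {u. \<phi> u \<and> \<not> \<psi> u}" by auto
  then show ?thesis by (simp add: measure_pmf.finite_measure_Union[symmetric] disjoint_iff)
qed

lemma pr_mono: "Pr P {u. \<phi> u \<and> \<psi> u} \<le> Pr P {u. \<phi> u}"
  by (rule measure_pmf.finite_measure_mono) auto

lemma pr_mono': "(\<And>u. \<phi> u \<Longrightarrow> \<psi> u) \<Longrightarrow> Pr P {u. \<phi> u} \<le> Pr P {u. \<psi> u}"
  by (rule measure_pmf.finite_measure_mono) auto

lemma pr_cong_supp: "(\<And>u. u \<in> set_pmf P \<Longrightarrow> \<phi> u = \<psi> u) \<Longrightarrow> Pr P {u. \<phi> u} = Pr P {u. \<psi> u}"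
proof -
  assume h: "\<And>u. u \<in> set_pmf P \<Longrightarrow> \<phi> u = \<psi> u"
  have "Pr P {u. \<phi> u} = Pr P ({u. \<phi> u} \<inter> set_pmf P)" by (simp add: measure_Int_set_pmf)
  also have "{u. \<phi> u} \<inter> set_pmf P = {u. \<psi> u} \<inter> set_pmf P" using h by auto
  also have "Pr P \<dots> = Pr P {u. \<psi> u}" by (simp add: measure_Int_set_pmf)
  finally show ?thesis .
qed

lemma pr_race: "Pr P {u. \<phi> u} = Pr P {u. \<phi> u \<and> Zr u = W} + Pr P {u. \<phi> u \<and> Zr u = B}"
proof -
  have "Pr P {u. \<phi> u} = Pr P {u. \<phi> u \<and> Zr u = W} + Pr P {u. \<phi> u \<and> \<not> Zr u = W}" by (rule pr_split)
  moreover have "{u. \<phi> u \<and> \<not> Zr u = W} = {u. \<phi> u \<and> Zr u = B}" by (auto intro: race.exhaust)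
  ultimately show ?thesis by simp
qed

lemma SubI_KEY: "SubI P \<Longrightarrow> KEY P"
  unfolding KEY_def
proof (intro allI)
  fix z x assume "SubI P"
  then have "cond_indep_ev P {u. Mobs u} (\<lambda>u. Ypot u z True) Zr Xc" by (simp add: SubI_def)
  from this[unfolded cond_indep_ev_def, rule_format, of True z x]
  show "Pr P {u. Mobs u \<and> Ypot u z True \<and> Xc u = x} * Pr P {u. Mobs u \<and> Zr u = z \<and> Xc u = x} =
    Pr P {u. Mobs u \<and> Ypot u z True \<and> Zr u = z \<and> Xc u = x} * Pr P {u. Mobs u \<and> Xc u = x}"
    by (simp add: mult.commute)
qed

lemma SeqI_SubI:
  assumes S: "SeqI P"
  shows "SubI P"
  unfolding SubI_def cond_indep_ev_def
proof (intro allI)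
  fix z a b c
  define px where "px = Pr P {u. Xc u = c}"
  define Yx where "Yx = Pr P {u. Ypot u z True = a \<and> Xc u = c}"
  define k where "k b = Pr P {u. Mobs u \<and> Ypot u z True = a \<and> Zr u = b \<and> Xc u = c}" for b
  define m where "m b = Pr P {u. Mobs u \<and> Zr u = b \<and> Xc u = c}" for b
  define y where "y b = Pr P {u. Ypot u z True = a \<and> Zr u = b \<and> Xc u = c}" for b
  define pi where "pi b = Pr P {u. Zr u = b \<and> Xc u = c}" for b
  have S2: "k b * pi b = y b * m b" for b
  proof -
    have "cond_indep P (\<lambda>u. Ypot u z True) Mobs (\<lambda>u. (Zr u, Xc u))" using S by (simp add: SeqI_def)
    from this[unfolded cond_indep_ev_def, rule_format, of a True "(b, c)"]
    show ?thesis by (simp add: k_def pi_def y_def m_def conj_ac)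
  qed
  have S1: "y b * px = Yx * pi b" for b
  proof -
    have ci: "cond_indep P (\<lambda>u. (Ypot u z True, Mpot u W)) Zr Xc" using S by (simp add: SeqI_def)
    have e: "Pr P {u. Ypot u z True = a \<and> Mpot u W = \<beta> \<and> Zr u = b \<and> Xc u = c} * px
       = Pr P {u. Ypot u z True = a \<and> Mpot u W = \<beta> \<and> Xc u = c} * pi b" for \<beta>
    proof -
      from ci[unfolded cond_indep_ev_def, rule_format, of "(a, \<beta>)" b c]
      show ?thesis by (simp add: px_def pi_def conj_ac)
    qed
    have "y b = Pr P {u. Ypot u z True = a \<and> Mpot u W = True \<and> Zr u = b \<and> Xc u = c} + Pr P {u. Ypot u z True = a \<and> Mpot u W = False \<and> Zr u = b \<and> Xc u = c}"
      unfolding y_def by (subst pr_split[where \<psi>="\<lambda>u. Mpot u W"]) (simp add: conj_ac)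
    moreover have "Yx = Pr P {u. Ypot u z True = a \<and> Mpot u W = True \<and> Xc u = c} + Pr P {u. Ypot u z True = a \<and> Mpot u W = False \<and> Xc u = c}"
      unfolding Yx_def by (subst pr_split[where \<psi>="\<lambda>u. Mpot u W"]) (simp add: conj_ac)
    ultimately show ?thesis using e[of True] e[of False] by (simp add: algebra_simps)
  qed
  have kb: "k b * px = Yx * m b" for b
  proof (cases "pi b > 0")
    case True
    have "k b * px * pi b = Yx * m b * pi b"
      using S1[of b] S2[of b] by (metis mult.assoc mult.commute)
    then show ?thesis using True by simp
  next
    case False
    then have "pi b = 0" using measure_nonneg[of P] by (simp add: pi_def) (meson measure_nonneg not_less order_antisym_conv)
    moreover have "k b \<le> pi b" unfolding k_def pi_def by (rule pr_mono') auto
    moreover have "m b \<le> pi b" unfolding m_def pi_def by (rule pr_mono') auto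
    ultimately have "k b = 0" "m b = 0" by (auto intro: antisym simp: k_def m_def)
    then show ?thesis by simp
  qed
  have mx: "Pr P {u. Mobs u \<and> Xc u = c} = m W + m B"
    unfolding m_def by (subst pr_race) (simp add: conj_ac)
  have kx: "Pr P {u. Mobs u \<and> Ypot u z True = a \<and> Xc u = c} = k W + k B"
    unfolding k_def by (subst pr_race) (simp add: conj_ac)
  have goal: "k b * (m W + m B) = (k W + k B) * m b"
  proof (cases "px > 0")
    case True
    have "k b * (m W + m B) * px = (k b * px) * (m W + m B)" by (simp add: algebra_simps)
    also have "\<dots> = (Yx * m b) * (m W + m B)" by (simp add: kb)
    also have "\<dots> = (Yx * m W + Yx * m B) * m b" by (simp add: algebra_simps)
    also have "\<dots> = (k W * px + k B * px) * m b" by (simp add: kb)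
    also have "\<dots> = (k W + k B) * m b * px" by (simp add: algebra_simps)
    finally have "k b * (m W + m B) * px = (k W + k B) * m b * px" .
    then show ?thesis using True by simp
  next
    case False
    then have "px = 0" by (simp add: px_def) (meson measure_nonneg not_less order_antisym_conv)
    moreover have "k b' \<le> px" for b' unfolding k_def px_def by (rule pr_mono') auto
    ultimately have "k b' = 0" for b' by (auto intro: antisym simp: k_def)
    then show ?thesis by simp
  qed
  show "Pr P {u. u \<in> {u. Mobs u} \<and> Ypot u z True = a \<and> Zr u = b \<and> Xc u = c} * Pr P {u. u \<in> {u. Mobs u} \<and> Xc u = c} =
        Pr P {u. u \<in> {u. Mobs u} \<and> Ypot u z True = a \<and> Xc u = c} * Pr P {u. u \<in> {u. Mobs u} \<and> Zr u = b \<and> Xc u = c}"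
    using goal mx kx by (simp add: k_def m_def)
qed

lemma pr_nonneg: "0 \<le> Pr P A" by simp

lemma TI_KEY_B:
  assumes ov: "overlap P" and TI: "TI P" and MI: "MI P" and MM: "MM P"
  shows "Pr P {u. Mobs u \<and> Ypot u B True \<and> Xc u = x} * Pr P {u. Mobs u \<and> Zr u = B \<and> Xc u = x}
     = Pr P {u. Mobs u \<and> Ypot u B True \<and> Zr u = B \<and> Xc u = x} * Pr P {u. Mobs u \<and> Xc u = x}"
proof -
  have mm: "\<And>u. u \<in> set_pmf P \<Longrightarrow> Mpot u W \<Longrightarrow> Mpot u B" using MM by (auto simp: MM_def)
  define A where "A = Pr P {u. Mpot u B \<and> Ypot u B True \<and> Zr u = B \<and> Xc u = x}"
  define Bq where "Bq = Pr P {u. Mpot u B \<and> Zr u = B \<and> Xc u = x}"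
  define C where "C = Pr P {u. Mpot u W \<and> Ypot u B True \<and> Zr u = W \<and> Xc u = x}"
  define D where "D = Pr P {u. Mpot u W \<and> Zr u = W \<and> Xc u = x}"
  define t where "t = Pr P {u. Mpot u W \<and> Xc u = x}"
  define a where "a = Pr P {u. Mpot u W \<and> Ypot u B True \<and> Xc u = x}"
  define e where "e = Pr P {u. Mpot u W \<and> Zr u = B \<and> Xc u = x}"
  define f where "f = Pr P {u. Mpot u W \<and> Ypot u B True \<and> Zr u = B \<and> Xc u = x}"
  define px where "px = Pr P {u. Xc u = x}"
  define piB where "piB = Pr P {u. Zr u = B \<and> Xc u = x}"
  have ti2: "cond_indep P (\<lambda>u. Ypot u B True) Zr (\<lambda>u. (Mpot u W, Mpot u B, Xc u))" using TI by (simp add: TI_def)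
  have ti1: "cond_indep P (\<lambda>u. Mpot u W) Zr Xc" using TI by (simp add: TI_def)
  have mi: "cond_indep_ev P {u. Zr u = B \<and> Mpot u B} (\<lambda>u. Ypot u B True) (\<lambda>u. Mpot u W) Xc" using MI by (simp add: MI_def)
  have cg: "Pr P {u. Mpot u W \<and> Mpot u B \<and> \<phi> u} = Pr P {u. Mpot u W \<and> \<phi> u}" for \<phi>
    by (rule pr_cong_supp) (use mm in auto)
  have TIW: "C * t = a * D"
  proof -
    from ti2[unfolded cond_indep_ev_def, rule_format, of True W "(True, True, x)"]
    have "Pr P {u. Mpot u W \<and> Mpot u B \<and> Ypot u B True \<and> Zr u = W \<and> Xc u = x} * Pr P {u. Mpot u W \<and> Mpot u B \<and> Xc u = x}
      = Pr P {u. Mpot u W \<and> Mpot u B \<and> Ypot u B True \<and> Xc u = x} * Pr P {u. Mpot u W \<and> Mpot u B \<and> Zr u = W \<and> Xc u = x}"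
      by (simp add: conj_ac)
    then show ?thesis unfolding cg by (simp add: C_def t_def a_def D_def)
  qed
  have TIB: "f * t = a * e"
  proof -
    from ti2[unfolded cond_indep_ev_def, rule_format, of True B "(True, True, x)"]
    have "Pr P {u. Mpot u W \<and> Mpot u B \<and> Ypot u B True \<and> Zr u = B \<and> Xc u = x} * Pr P {u. Mpot u W \<and> Mpot u B \<and> Xc u = x}
      = Pr P {u. Mpot u W \<and> Mpot u B \<and> Ypot u B True \<and> Xc u = x} * Pr P {u. Mpot u W \<and> Mpot u B \<and> Zr u = B \<and> Xc u = x}"
      by (simp add: conj_ac)
    then show ?thesis unfolding cg by (simp add: f_def t_def a_def e_def)
  qed
  have MIB: "f * Bq = A * e"
  proof -
    from mi[unfolded cond_indep_ev_def, rule_format, of True True x]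
    have "Pr P {u. Mpot u W \<and> Mpot u B \<and> Ypot u B True \<and> Zr u = B \<and> Xc u = x} * Pr P {u. Mpot u B \<and> Zr u = B \<and> Xc u = x}
      = Pr P {u. Mpot u B \<and> Ypot u B True \<and> Zr u = B \<and> Xc u = x} * Pr P {u. Mpot u W \<and> Mpot u B \<and> Zr u = B \<and> Xc u = x}"
      by (simp add: conj_ac)
    then show ?thesis unfolding cg by (simp add: f_def Bq_def A_def e_def)
  qed
  have TI1: "e * px = t * piB"
    using ti1[unfolded cond_indep_ev_def, rule_format, of True B x]
    by (simp add: e_def px_def t_def piB_def conj_ac)
  have red: "C * Bq = A * D"
  proof (cases "D > 0")
    case False
    then have D0: "D = 0" using pr_nonneg[of P] by (simp add: D_def) (meson measure_nonneg not_less order_antisym_conv)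
    have "C \<le> D" unfolding C_def D_def by (rule pr_mono') auto
    then have "C = 0" using D0 by (simp add: C_def antisym)
    then show ?thesis using D0 by simp
  next
    case True
    have "D \<le> t" unfolding D_def t_def by (rule pr_mono') auto
    then have tpos: "t > 0" using True by simp
    have "D \<le> Pr P {u. Mobs u \<and> Xc u = x}" unfolding D_def by (rule pr_mono') (auto simp: Mobs_def)
    then have "Pr P {u. Mobs u \<and> Xc u = x} > 0" using True by simp
    then have "Pr P {u. Mobs u \<and> Xc u = x \<and> Zr u = B} > 0" using ov by (simp add: overlap_def)
    moreover have "Pr P {u. Mobs u \<and> Xc u = x \<and> Zr u = B} \<le> piB" unfolding piB_def by (rule pr_mono') auto
    ultimately have piBpos: "piB > 0" by simp
    have "e * px > 0" using TI1 tpos piBpos by simp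
    then have epos: "e > 0" using pr_nonneg[of P] by (simp add: e_def px_def zero_less_mult_iff)
    have "C * Bq * (t * e) = A * D * (t * e)"
    proof -
      have "C * Bq * (t * e) = (C * t) * Bq * e" by (simp add: algebra_simps)
      also have "\<dots> = D * Bq * (a * e)" by (simp add: TIW algebra_simps)
      also have "\<dots> = D * Bq * (f * t)" by (simp add: TIB)
      also have "\<dots> = D * (f * Bq) * t" by (simp add: algebra_simps)
      also have "\<dots> = D * (A * e) * t" by (simp add: MIB)
      also have "\<dots> = A * D * (t * e)" by (simp add: algebra_simps)
      finally show ?thesis .
    qed
    then show ?thesis using tpos epos by simp
  qed
  have s1: "Pr P {u. Mobs u \<and> Ypot u B True \<and> Xc u = x} = C + A"
    unfolding C_def A_def by (subst pr_race) (auto simp: Mobs_def conj_ac intro!: arg_cong2[where f="(+)"] arg_cong[where f="Pr P"])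
  have s2: "Pr P {u. Mobs u \<and> Xc u = x} = D + Bq"
    unfolding D_def Bq_def by (subst pr_race) (auto simp: Mobs_def conj_ac intro!: arg_cong2[where f="(+)"] arg_cong[where f="Pr P"])
  have s3: "Pr P {u. Mobs u \<and> Zr u = B \<and> Xc u = x} = Bq"
    unfolding Bq_def by (auto simp: Mobs_def intro!: arg_cong[where f="Pr P"])
  have s4: "Pr P {u. Mobs u \<and> Ypot u B True \<and> Zr u = B \<and> Xc u = x} = A"
    unfolding A_def by (auto simp: Mobs_def intro!: arg_cong[where f="Pr P"])
  show ?thesis unfolding s1 s2 s3 s4 using red by (simp add: algebra_simps)
qed

lemma pr_pos_le: "Pr P X > 0 \<Longrightarrow> Pr P X \<le> Pr P Y \<Longrightarrow> Pr P Y > 0" by simp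

lemma pr_zero_le: "Pr P Y = 0 \<Longrightarrow> Pr P X \<le> Pr P Y \<Longrightarrow> Pr P X = 0"
  by (simp add: antisym)

lemma pr_not_pos: "\<not> Pr P X > 0 \<Longrightarrow> Pr P X = 0"
  by (meson measure_nonneg not_less order_antisym_conv)

lemma TI_KEY_W:
  assumes ov: "overlap P" and TI: "TI P" and MI: "MI P" and MM: "MM P"
  shows "Pr P {u. Mobs u \<and> Ypot u W True \<and> Xc u = x} * Pr P {u. Mobs u \<and> Zr u = W \<and> Xc u = x}
     = Pr P {u. Mobs u \<and> Ypot u W True \<and> Zr u = W \<and> Xc u = x} * Pr P {u. Mobs u \<and> Xc u = x}"
proof -
  have mm: "\<And>u. u \<in> set_pmf P \<Longrightarrow> Mpot u W \<Longrightarrow> Mpot u B" using MM by (auto simp: MM_def)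
  define t11 where "t11 = Pr P {u. Mpot u W \<and> Xc u = x}"
  define t01 where "t01 = Pr P {u. Mpot u B \<and> \<not> Mpot u W \<and> Xc u = x}"
  define n11 where "n11 r = Pr P {u. Mpot u W \<and> Zr u = r \<and> Xc u = x}" for r
  define n01 where "n01 r = Pr P {u. Mpot u B \<and> \<not> Mpot u W \<and> Zr u = r \<and> Xc u = x}" for r
  define y11 where "y11 r = Pr P {u. Mpot u W \<and> Ypot u W True \<and> Zr u = r \<and> Xc u = x}" for r
  define y01 where "y01 r = Pr P {u. Mpot u B \<and> \<not> Mpot u W \<and> Ypot u W True \<and> Zr u = r \<and> Xc u = x}" for r
  define a11 where "a11 = Pr P {u. Mpot u W \<and> Ypot u W True \<and> Xc u = x}"
  define a01 where "a01 = Pr P {u. Mpot u B \<and> \<not> Mpot u W \<and> Ypot u W True \<and> Xc u = x}"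
  define px where "px = Pr P {u. Xc u = x}"
  define pi where "pi r = Pr P {u. Zr u = r \<and> Xc u = x}" for r
  have ti2: "cond_indep P (\<lambda>u. Ypot u W True) Zr (\<lambda>u. (Mpot u W, Mpot u B, Xc u))" using TI by (simp add: TI_def)
  have ti1w: "cond_indep P (\<lambda>u. Mpot u W) Zr Xc" using TI by (simp add: TI_def)
  have ti1b: "cond_indep P (\<lambda>u. Mpot u B) Zr Xc" using TI by (simp add: TI_def)
  have mi: "cond_indep_ev P {u. Zr u = W \<and> Mpot u B} (\<lambda>u. Ypot u W True) (\<lambda>u. Mpot u W) Xc" using MI by (simp add: MI_def)
  have cg: "Pr P {u. Mpot u W \<and> Mpot u B \<and> \<phi> u} = Pr P {u. Mpot u W \<and> \<phi> u}" for \<phi>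
    by (rule pr_cong_supp) (use mm in auto)
  have T11: "y11 r * t11 = a11 * n11 r" for r
  proof -
    from ti2[unfolded cond_indep_ev_def, rule_format, of True r "(True, True, x)"]
    have "Pr P {u. Mpot u W \<and> Mpot u B \<and> Ypot u W True \<and> Zr u = r \<and> Xc u = x} * Pr P {u. Mpot u W \<and> Mpot u B \<and> Xc u = x}
      = Pr P {u. Mpot u W \<and> Mpot u B \<and> Ypot u W True \<and> Xc u = x} * Pr P {u. Mpot u W \<and> Mpot u B \<and> Zr u = r \<and> Xc u = x}"
      by (simp add: conj_ac)
    then show ?thesis unfolding cg by (simp add: y11_def t11_def a11_def n11_def)
  qed
  have T01: "y01 r * t01 = a01 * n01 r" for r
    using ti2[unfolded cond_indep_ev_def, rule_format, of True r "(False, True, x)"]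
    by (simp add: y01_def t01_def a01_def n01_def conj_ac)
  have splitMb: "Pr P {u. Mpot u B \<and> \<phi> u} = Pr P {u. Mpot u W \<and> \<phi> u} + Pr P {u. Mpot u B \<and> \<not> Mpot u W \<and> \<phi> u}" for \<phi>
  proof -
    have "Pr P {u. Mpot u B \<and> \<phi> u} = Pr P {u. (Mpot u B \<and> \<phi> u) \<and> Mpot u W} + Pr P {u. (Mpot u B \<and> \<phi> u) \<and> \<not> Mpot u W}"
      by (rule pr_split)
    also have "Pr P {u. (Mpot u B \<and> \<phi> u) \<and> Mpot u W} = Pr P {u. Mpot u W \<and> Mpot u B \<and> \<phi> u}"
      by (rule arg_cong[where f="Pr P"]) auto
    also have "Pr P {u. (Mpot u B \<and> \<phi> u) \<and> \<not> Mpot u W} = Pr P {u. Mpot u B \<and> \<not> Mpot u W \<and> \<phi> u}"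
      by (rule arg_cong[where f="Pr P"]) auto
    finally show ?thesis unfolding cg .
  qed
  have MIW: "y11 W * n01 W = y01 W * n11 W"
  proof -
    from mi[unfolded cond_indep_ev_def, rule_format, of True True x]
    have "Pr P {u. Mpot u W \<and> Mpot u B \<and> Ypot u W True \<and> Zr u = W \<and> Xc u = x} * Pr P {u. Mpot u B \<and> Zr u = W \<and> Xc u = x}
      = Pr P {u. Mpot u B \<and> Ypot u W True \<and> Zr u = W \<and> Xc u = x} * Pr P {u. Mpot u W \<and> Mpot u B \<and> Zr u = W \<and> Xc u = x}"
      by (simp add: conj_ac)
    then have "y11 W * (n11 W + n01 W) = (y11 W + y01 W) * n11 W"
      unfolding cg splitMb[of "\<lambda>u. Zr u = W \<and> Xc u = x"] splitMb[of "\<lambda>u. Ypot u W True \<and> Zr u = W \<and> Xc u = x"]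
      by (simp add: y11_def n11_def n01_def y01_def)
    then show ?thesis by (simp add: algebra_simps)
  qed
  have TI1w: "n11 r * px = t11 * pi r" for r
    using ti1w[unfolded cond_indep_ev_def, rule_format, of True r x]
    by (simp add: n11_def px_def t11_def pi_def conj_ac)
  have TI1b: "n01 r * px = t01 * pi r" for r
  proof -
    from ti1b[unfolded cond_indep_ev_def, rule_format, of True r x]
    have "Pr P {u. Mpot u B \<and> Zr u = r \<and> Xc u = x} * px = Pr P {u. Mpot u B \<and> Xc u = x} * pi r"
      by (simp add: px_def pi_def conj_ac)
    then have "(n11 r + n01 r) * px = (t11 + t01) * pi r"
      unfolding splitMb[of "\<lambda>u. Zr u = r \<and> Xc u = x"] splitMb[of "\<lambda>u. Xc u = x"]
      by (simp add: n11_def n01_def t11_def t01_def)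
    then show ?thesis using TI1w[of r] by (simp add: algebra_simps)
  qed
  have red: "(y11 B + y01 B) * n11 W = y11 W * (n11 B + n01 B)"
  proof (cases "n11 W > 0")
    case False
    then have D0: "n11 W = 0" unfolding n11_def by (rule pr_not_pos)
    have "y11 W = 0" using D0 unfolding y11_def n11_def by (rule pr_zero_le) (rule pr_mono', auto)
    then show ?thesis using D0 by simp
  next
    case True
    have tpos: "t11 > 0" using True unfolding n11_def t11_def by (rule pr_pos_le) (rule pr_mono', auto)
    have "Pr P {u. Mobs u \<and> Xc u = x} > 0" using True unfolding n11_def
      by (rule pr_pos_le) (rule pr_mono', auto simp: Mobs_def)
    then have ovr: "Pr P {u. Mobs u \<and> Xc u = x \<and> Zr u = r} > 0" for r using ov by (simp add: overlap_def)
    have pipos: "pi r > 0" for r using ovr[of r] unfolding pi_def by (rule pr_pos_le) (rule pr_mono', auto)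
    have part1: "y11 B * n11 W = y11 W * n11 B"
    proof -
      have "y11 B * n11 W * t11 = y11 W * n11 B * t11"
      proof -
        have "y11 B * n11 W * t11 = (y11 B * t11) * n11 W" by (simp add: algebra_simps)
        also have "\<dots> = a11 * n11 B * n11 W" by (simp add: T11)
        also have "\<dots> = (a11 * n11 W) * n11 B" by (simp add: algebra_simps)
        also have "\<dots> = (y11 W * t11) * n11 B" by (simp add: T11)
        finally show ?thesis by (simp add: algebra_simps)
      qed
      then show ?thesis using tpos by simp
    qed
    have part2: "y01 B * n11 W = y11 W * n01 B"
    proof (cases "t01 > 0")
      case False
      then have t0: "t01 = 0" unfolding t01_def by (rule pr_not_pos)
      have "n01 B = 0" using t0 unfolding n01_def t01_def by (rule pr_zero_le) (rule pr_mono', auto)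
      moreover have "y01 B = 0" using t0 unfolding y01_def t01_def by (rule pr_zero_le) (rule pr_mono', auto)
      ultimately show ?thesis by simp
    next
      case True
      have "n01 W * px > 0" using TI1b[of W] True pipos[of W] by simp
      then have npos: "n01 W > 0" using pr_nonneg[of P] by (simp add: n01_def px_def zero_less_mult_iff)
      have "y01 B * n11 W * (t01 * n01 W) = y11 W * n01 B * (t01 * n01 W)"
      proof -
        have "y01 B * n11 W * (t01 * n01 W) = (y01 B * t01) * n11 W * n01 W" by (simp add: algebra_simps)
        also have "\<dots> = (a01 * n01 B) * n11 W * n01 W" by (simp add: T01)
        also have "\<dots> = n01 B * n11 W * (a01 * n01 W)" by (simp add: algebra_simps)
        also have "\<dots> = n01 B * n11 W * (y01 W * t01)" by (simp add: T01)
        also have "\<dots> = n01 B * (y01 W * n11 W) * t01" by (simp add: algebra_simps)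
        also have "\<dots> = n01 B * (y11 W * n01 W) * t01" by (simp add: MIW)
        also have "\<dots> = y11 W * n01 B * (t01 * n01 W)" by (simp add: algebra_simps)
        finally show ?thesis .
      qed
      then show ?thesis using True npos by simp
    qed
    show ?thesis using part1 part2 by (simp add: algebra_simps)
  qed
  have s1: "Pr P {u. Mobs u \<and> Ypot u W True \<and> Xc u = x} = y11 W + (y11 B + y01 B)"
  proof -
    have "Pr P {u. Mobs u \<and> Ypot u W True \<and> Xc u = x} = Pr P {u. Mpot u W \<and> Ypot u W True \<and> Zr u = W \<and> Xc u = x} + Pr P {u. Mpot u B \<and> Ypot u W True \<and> Zr u = B \<and> Xc u = x}"
      by (subst pr_race) (auto simp: Mobs_def conj_ac intro!: arg_cong2[where f="(+)"] arg_cong[where f="Pr P"])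
    then show ?thesis unfolding splitMb[of "\<lambda>u. Ypot u W True \<and> Zr u = B \<and> Xc u = x"]
      by (simp add: y11_def y01_def)
  qed
  have s2: "Pr P {u. Mobs u \<and> Xc u = x} = n11 W + (n11 B + n01 B)"
  proof -
    have "Pr P {u. Mobs u \<and> Xc u = x} = Pr P {u. Mpot u W \<and> Zr u = W \<and> Xc u = x} + Pr P {u. Mpot u B \<and> Zr u = B \<and> Xc u = x}"
      by (subst pr_race) (auto simp: Mobs_def conj_ac intro!: arg_cong2[where f="(+)"] arg_cong[where f="Pr P"])
    then show ?thesis unfolding splitMb[of "\<lambda>u. Zr u = B \<and> Xc u = x"]
      by (simp add: n11_def n01_def)
  qed
  have s3: "Pr P {u. Mobs u \<and> Zr u = W \<and> Xc u = x} = n11 W"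
    unfolding n11_def by (auto simp: Mobs_def intro!: arg_cong[where f="Pr P"])
  have s4: "Pr P {u. Mobs u \<and> Ypot u W True \<and> Zr u = W \<and> Xc u = x} = y11 W"
    unfolding y11_def by (auto simp: Mobs_def intro!: arg_cong[where f="Pr P"])
  show ?thesis unfolding s1 s2 s3 s4 using red by (simp add: algebra_simps)
qed

lemma TI_KEY:
  assumes "overlap P" "TI P" "MI P" "MM P"
  shows "KEY P"
  unfolding KEY_def
proof (intro allI)
  fix z x show "Pr P {u. Mobs u \<and> Ypot u z True \<and> Xc u = x} * Pr P {u. Mobs u \<and> Zr u = z \<and> Xc u = x} =
       Pr P {u. Mobs u \<and> Ypot u z True \<and> Zr u = z \<and> Xc u = x} * Pr P {u. Mobs u \<and> Xc u = x}"
    using TI_KEY_W[OF assms, of x] TI_KEY_B[OF assms, of x] by (cases z) auto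
qed

lemma pr_map_set:
  assumes "finite S" "S \<noteq> {}"
  shows "Pr (map_pmf g (pmf_of_set S)) {u. \<phi> u} = (\<Sum>s\<in>S. of_bool (\<phi> (g s))) / real (card S)"
  using assms by (simp add: measure_pmf_of_set vimage_def sum_of_bool_eq Int_def)

lemma cond_indep_fun:
  assumes "\<And>u. u \<in> set_pmf P \<Longrightarrow> A u = h (D u)"
  shows "cond_indep_ev P E A C D"
  unfolding cond_indep_ev_def
proof (intro allI)
  fix a b c
  show "Pr P {u. u \<in> E \<and> A u = a \<and> C u = b \<and> D u = c} * Pr P {u. u \<in> E \<and> D u = c} =
        Pr P {u. u \<in> E \<and> A u = a \<and> D u = c} * Pr P {u. u \<in> E \<and> C u = b \<and> D u = c}"
  proof (cases "h c = a")
    case True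
    have "Pr P {u. u \<in> E \<and> A u = a \<and> C u = b \<and> D u = c} = Pr P {u. u \<in> E \<and> C u = b \<and> D u = c}"
      by (rule pr_cong_supp) (use assms True in auto)
    moreover have "Pr P {u. u \<in> E \<and> A u = a \<and> D u = c} = Pr P {u. u \<in> E \<and> D u = c}"
      by (rule pr_cong_supp) (use assms True in auto)
    ultimately show ?thesis by simp
  next
    case False
    have "Pr P {u. u \<in> E \<and> A u = a \<and> C u = b \<and> D u = c} = Pr P {u. False}"
      by (rule pr_cong_supp) (use assms False in auto)
    moreover have "Pr P {u. u \<in> E \<and> A u = a \<and> D u = c} = Pr P {u. False}"
      by (rule pr_cong_supp) (use assms False in auto)
    ultimately show ?thesis by simp
  qed
qed

lemma CDE_eq:
  assumes "Pr P {u. Mobs u} > 0"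
  shows "CDE_Ob P = (Pr P {u. Mobs u \<and> Ypot u B True} - Pr P {u. Mobs u \<and> Ypot u W True}) / Pr P {u. Mobs u}"
proof -
  let ?Q = "cond_pmf P {u. Mobs u}"
  have i: "integrable (measure_pmf ?Q) (\<lambda>u. of_bool (Ypot u z True) :: real)" for z
    by (rule measure_pmf.integrable_const_bound[where B=1]) auto
  have "CDE_Ob P = measure_pmf.prob ?Q {u. Ypot u B True} - measure_pmf.prob ?Q {u. Ypot u W True}"
    unfolding CDE_Ob_def by (subst Bochner_Integration.integral_diff[OF i i]) (simp add: expect_of_bool)
  also have "\<dots> = (Pr P {u. Mobs u \<and> Ypot u B True} - Pr P {u. Mobs u \<and> Ypot u W True}) / Pr P {u. Mobs u}"
    using assms by (simp add: prob_cond_pmf Int_def diff_divide_distrib)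
  finally show ?thesis .
qed

lemma obs_support:
  assumes "Pr P {u. Mobs u} > 0" and "t \<in> set_pmf (obs_dist P)"
  shows "\<exists>u\<in>set_pmf P. Mobs u \<and> t = (Xc u, Zr u, Yobs u)"
proof -
  have ne: "set_pmf P \<inter> {u. Mobs u} \<noteq> {}"
  proof
    assume "set_pmf P \<inter> {u. Mobs u} = {}"
    then have "Pr P ({u. Mobs u} \<inter> set_pmf P) = 0" by (simp add: Int_commute)
    then show False using assms by (simp add: measure_Int_set_pmf)
  qed
  show ?thesis using assms(2) unfolding obs_dist_def by (auto simp: set_cond_pmf[OF ne])
qed

lemma AE_support:
  "AE \<omega> in stream_space (measure_pmf D). \<forall>i. \<omega> !! i \<in> set_pmf D"
proof -
  have "AE \<omega> in stream_space (measure_pmf D). stream_all (\<lambda>x. x \<in> set_pmf D) \<omega>"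
    by (rule prob_space.AE_stream_all[OF measure_pmf.prob_space_axioms]) (auto simp: AE_measure_pmf)
  then show ?thesis unfolding stream_all_def .
qed

definition g1 :: "race \<Rightarrow> unit" where
  "g1 r = \<lparr>Xc = 0, Zr = r, Mpot = (\<lambda>_. True), Ypot = (\<lambda>z m. z \<noteq> r)\<rparr>"
definition P1 :: "unit pmf" where "P1 = map_pmf g1 (pmf_of_set {W, B})"

lemma P1_pr: "Pr P1 {u. \<phi> u} = (of_bool (\<phi> (g1 W)) + of_bool (\<phi> (g1 B))) / 2"
  unfolding P1_def by (subst pr_map_set) auto

lemma P1_overlap: "overlap P1"
  unfolding overlap_def P1_pr by (auto simp: g1_def Mobs_def) (metis race.exhaust)

lemma P1_Mobs: "Pr P1 {u. Mobs u} > 0"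
  using P1_overlap by (simp add: overlap_def)

lemma P1_set: "set_pmf P1 = g1 ` {W, B}"
  unfolding P1_def by simp

lemma P1_consistent: "consistent P1"
proof -
  have cde: "CDE_Ob P1 = 0"
    by (subst CDE_eq[OF P1_Mobs]) (simp add: P1_pr g1_def Mobs_def)
  have y: "\<not> snd (snd t)" if "t \<in> set_pmf (obs_dist P1)" for t
    using obs_support[OF P1_Mobs that] by (auto simp: P1_set g1_def Yobs_def Mobs_def)
  show ?thesis unfolding consistent_def cde
    using AE_support[of "obs_dist P1"]
  proof eventually_elim
    case (elim \<omega>)
    have "cy \<omega> n z x = 0" for n z x unfolding cy_def using y elim by (auto intro!: sum.neutral)
    then have "Delta (stake n \<omega>) = 0" for n unfolding Delta_stake by simp
    then show ?case by simp
  qed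
qed

lemma P1_not_SubI: "\<not> SubI P1"
proof
  assume "SubI P1"
  then have "cond_indep_ev P1 {u. Mobs u} (\<lambda>u. Ypot u B True) Zr Xc" by (simp add: SubI_def)
  from this[unfolded cond_indep_ev_def, rule_format, of True W 0]
  show False by (simp add: P1_pr g1_def Mobs_def)
qed

lemma P1_not_TI: "\<not> TI P1"
proof
  assume "TI P1"
  then have "cond_indep P1 (\<lambda>u. Ypot u B True) Zr (\<lambda>u. (Mpot u W, Mpot u B, Xc u))" by (simp add: TI_def)
  from this[unfolded cond_indep_ev_def, rule_format, of True W "(True, True, 0)"]
  show False by (simp add: P1_pr g1_def)
qed

definition g2 :: "race \<Rightarrow> unit" where
  "g2 r = \<lparr>Xc = 0, Zr = r, Mpot = (\<lambda>_. True), Ypot = (\<lambda>z m. \<not> m \<and> r = B)\<rparr>"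
definition P2 :: "unit pmf" where "P2 = map_pmf g2 (pmf_of_set {W, B})"

lemma P2_pr: "Pr P2 {u. \<phi> u} = (of_bool (\<phi> (g2 W)) + of_bool (\<phi> (g2 B))) / 2"
  unfolding P2_def by (subst pr_map_set) auto

lemma P2_overlap: "overlap P2"
  unfolding overlap_def P2_pr by (auto simp: g2_def Mobs_def) (metis race.exhaust)

lemma P2_SubI: "SubI P2"
  unfolding SubI_def
  by (intro allI cond_indep_fun[where h="\<lambda>_. False"]) (auto simp: P2_def g2_def)

lemma P2_not_SeqI: "\<not> SeqI P2"
proof
  assume "SeqI P2"
  then have "cond_indep P2 (\<lambda>u. (Ypot u W False, Mpot u W)) Zr Xc" by (simp add: SeqI_def)
  from this[unfolded cond_indep_ev_def, rule_format, of "(True, True)" B 0]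
  show False by (simp add: P2_pr g2_def)
qed

definition g3 :: "race \<times> bool \<Rightarrow> unit" where
  "g3 rs = \<lparr>Xc = 0, Zr = fst rs, Mpot = (\<lambda>z. if z = B then snd rs else \<not> snd rs),
            Ypot = (\<lambda>z m. z = B \<and> m \<and> snd rs)\<rparr>"
definition P3 :: "unit pmf" where
  "P3 = map_pmf g3 (pmf_of_set {(W, True), (W, False), (B, True), (B, False)})"

lemma P3_pr: "Pr P3 {u. \<phi> u} = (of_bool (\<phi> (g3 (W, True))) + of_bool (\<phi> (g3 (W, False)))
   + of_bool (\<phi> (g3 (B, True))) + of_bool (\<phi> (g3 (B, False)))) / 4"
  unfolding P3_def by (subst pr_map_set) auto

lemma P3_set: "set_pmf P3 = g3 ` {(W, True), (W, False), (B, True), (B, False)}"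
  unfolding P3_def by simp

lemma P3_overlap: "overlap P3"
  unfolding overlap_def P3_pr by (auto simp: g3_def Mobs_def) (metis race.exhaust)

lemma P3_Mobs: "Pr P3 {u. Mobs u} > 0"
  using P3_overlap by (simp add: overlap_def)

lemma P3_TI: "TI P3"
  unfolding TI_def
proof (intro allI conjI)
  fix z z' :: race and m :: bool
  show "cond_indep P3 (\<lambda>u. Ypot u z' m) Zr (\<lambda>u. (Mpot u W, Mpot u B, Xc u))"
    by (rule cond_indep_fun[where h="\<lambda>(w, b, x). z' = B \<and> m \<and> b"]) (auto simp: P3_set g3_def)
  show "cond_indep P3 (\<lambda>u. Mpot u z) Zr Xc"
    unfolding cond_indep_ev_def
  proof (intro allI)
    fix a :: bool and b :: race and c :: nat
    show "Pr P3 {u. u \<in> UNIV \<and> Mpot u z = a \<and> Zr u = b \<and> Xc u = c} * Pr P3 {u. u \<in> UNIV \<and> Xc u = c} =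
          Pr P3 {u. u \<in> UNIV \<and> Mpot u z = a \<and> Xc u = c} * Pr P3 {u. u \<in> UNIV \<and> Zr u = b \<and> Xc u = c}"
      by (cases z; cases b; cases a; cases "c = 0") (auto simp: P3_pr g3_def)
  qed
qed

lemma P3_not_consistent: "\<not> consistent P3"
proof
  assume c: "consistent P3"
  have cde: "CDE_Ob P3 = 1/2"
    by (subst CDE_eq[OF P3_Mobs]) (simp add: P3_pr g3_def Mobs_def)
  have supp: "t = (0, B, True) \<or> t = (0, W, False)" if "t \<in> set_pmf (obs_dist P3)" for t
    using obs_support[OF P3_Mobs that] by (auto simp: P3_set g3_def Yobs_def Mobs_def)
  have "AE \<omega> in stream_space (measure_pmf (obs_dist P3)). False"
    using AE_support[of "obs_dist P3"] c[unfolded consistent_def cde]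
  proof eventually_elim
    case (elim \<omega>)
    have s: "\<omega> !! i = (0, B, True) \<or> \<omega> !! i = (0, W, False)" for i using elim(1) supp by blast
    have f0: "fst (\<omega> !! i) = 0" for i using s[of i] by auto
    have D01: "Delta (stake n \<omega>) = 0 \<or> Delta (stake n \<omega>) = 1" for n
    proof (cases "n = 0")
      case True then show ?thesis by (simp add: Delta_def)
    next
      case False
      have S: "fst ` set (stake n \<omega>) = {0}"
      proof -
        have "fst ` set (stake n \<omega>) \<subseteq> {0}" unfolding set_stake_eq using f0 by auto
        moreover have "fst (\<omega> !! 0) \<in> fst ` set (stake n \<omega>)" unfolding set_stake_eq
          using False by (intro imageI) (auto simp del: snth.simps)
        then have "0 \<in> fst ` set (stake n \<omega>)" by (metis f0)
        ultimately show ?thesis by blast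
      qed
      have cyW: "cy \<omega> n W 0 = 0" unfolding cy_def
      proof (intro sum.neutral ballI)
        fix i show "of_bool (fst (\<omega> !! i) = 0 \<and> fst (snd (\<omega> !! i)) = W \<and> snd (snd (\<omega> !! i))) = (0::real)"
          using s[of i] by auto
      qed
      have cyB: "cy \<omega> n B 0 = czx \<omega> n B 0" unfolding cy_def czx_def
      proof (intro sum.cong refl)
        fix i show "of_bool (fst (\<omega> !! i) = 0 \<and> fst (snd (\<omega> !! i)) = B \<and> snd (snd (\<omega> !! i))) =
            (of_bool (fst (\<omega> !! i) = 0 \<and> fst (snd (\<omega> !! i)) = B) :: real)"
          using s[of i] by auto
      qed
      have cx: "cx \<omega> n 0 = real n" unfolding cx_def using f0 by simp
      show ?thesis unfolding Delta_stake S using False by (simp add: cyW cyB cx)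
    qed
    from tendstoD[OF elim(2), of "1/2"] obtain n where "dist (Delta (stake n \<omega>)) (1/2) < 1/2"
      by (auto simp: eventually_sequentially)
    then show False using D01[of n] by (auto simp: dist_real_def)
  qed
  moreover have "prob_space (stream_space (measure_pmf (obs_dist P3)))"
    by (rule prob_space.prob_space_stream_space) (rule measure_pmf.prob_space_axioms)
  ultimately show False by (simp add: prob_space.AE_False)
qed

theorem theorem10:
  shows
   "(\<forall>P. overlap P \<longrightarrow> SeqI P \<longrightarrow> SubI P)
  \<and> (\<exists>P. overlap P \<and> SubI P \<and> \<not> SeqI P)
  \<and> (\<forall>P. overlap P \<longrightarrow> SubI P \<longrightarrow> consistent P)
  \<and> (\<exists>P. overlap P \<and> consistent P \<and> \<not> SubI P)
  \<and> (\<exists>P. overlap P \<and> consistent P \<and> \<not> TI P)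
  \<and> (\<exists>P. overlap P \<and> TI P \<and> \<not> consistent P)
  \<and> (\<forall>P. overlap P \<longrightarrow> TI P \<longrightarrow> MI P \<longrightarrow> MM P \<longrightarrow> consistent P)
  \<and> (\<exists>P. overlap P \<and> consistent P \<and> \<not> (TI P \<and> MI P \<and> MM P))"
proof (intro conjI)
  show "\<forall>P. overlap P \<longrightarrow> SeqI P \<longrightarrow> SubI P" using SeqI_SubI by blast
  show "\<exists>P. overlap P \<and> SubI P \<and> \<not> SeqI P" using P2_overlap P2_SubI P2_not_SeqI by blast
  show "\<forall>P. overlap P \<longrightarrow> SubI P \<longrightarrow> consistent P" using KEY_consistent SubI_KEY by blast
  show "\<exists>P. overlap P \<and> consistent P \<and> \<not> SubI P" using P1_overlap P1_consistent P1_not_SubI by blast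
  show "\<exists>P. overlap P \<and> consistent P \<and> \<not> TI P" using P1_overlap P1_consistent P1_not_TI by blast
  show "\<exists>P. overlap P \<and> TI P \<and> \<not> consistent P" using P3_overlap P3_TI P3_not_consistent by blast
  show "\<forall>P. overlap P \<longrightarrow> TI P \<longrightarrow> MI P \<longrightarrow> MM P \<longrightarrow> consistent P" using KEY_consistent TI_KEY by blast
  show "\<exists>P. overlap P \<and> consistent P \<and> \<not> (TI P \<and> MI P \<and> MM P)" using P1_overlap P1_consistent P1_not_TI by blast
qed

end
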